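(* Consider the sequence of distributed systems under the RJSQ policy described in the context (origins unknown or known). Assume the systems are initially empty, $\lim_{n\to\infty}\sqrt n(1-\rho_n)=\beta\in\mathbb R$, $\lim\chi_n=0$, $\lim\sqrt n\chi_n=\infty$, $\mathbb E[z(1)^4]+\sum_{k=1}^s\mathbb E[w_k(1)^4]<\infty$, and $\lim_{n\to\infty}\sqrt n\chi_n/\sqrt{\log\log n}=\infty$, and let $C,C'>0$ be constants such that for each $T>0$, almost surely, $\sup_{0\le t\le T}\max_{k,\ell}|\tilde L_{n,k}(t)-\tilde L_{n,\ell}(t)|<\max\{C\chi_n,\,C'(\log\log n+\log(n\chi_n^2))/(\sqrt n\chi_n)\}$ for all large $n$. Then the order of magnitude (in $n$) of the upper bound $\max\{C\chi_n,\,C'(\log\log n+\log(n\chi_n^2))/(\sqrt n\chi_n)\}$ is minimized by choosing $\chi_n=C''n^{-1/4}\sqrt{\log n}$ with $C''>0$; and with this choice, for every $T>0$, with probability 1, \[ \sup_{0\le t\le T}\max_{k,\ell=1,\ldots,s}|\tilde L_{n,k}(t)-\tilde L_{n,\ell}(t)|=O\big(n^{-1/4}\sqrt{\log n}\big). \]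
   Context: Setting (distributed systems under RJSQ). Fix integers $s\ge 2$, $b\ge 1$, and rates $0<\mu_1\le\cdots\le\mu_s$; put $\mu=\sum_{k=1}^s\mu_k$. For each $n\in\mathbb{N}$ there is a system with $s$ stations; each station has one work-conserving server, unlimited waiting room and FCFS discipline. All systems are driven by the following mutually independent primitives: (1) i.i.d. nonnegative $z(1),z(2),\ldots$ with mean $1$ and coefficient of variation $c_0<\infty$; (2) for each $k$, i.i.d. nonnegative $w_k(1),w_k(2),\ldots$ with mean $1$ and coefficient of variation $c_k<\infty$, where $w_k(i)$ is the service requirement of the $i$th customer served at station $k$, whose service time there is $w_k(i)/\mu_k$; (3) i.i.d. random vectors $\boldsymbol\gamma(j)=(\gamma_1(j),\ldots,\gamma_s(j))$ with $\mathbb{P}[\boldsymbol\gamma(j)=\boldsymbol d_m]=p_m>0$ for $m=1,\ldots,b$, where $\boldsymbol d_m=(d_{m,1},\ldots,d_{m,s})\in\mathbb{R}_+^s$ and $\sum_m p_m=1$ (customer $j$ is "from origin $m$" if $\boldsymbol\gamma(j)=\boldsymbol d_m$); (4) i.i.d. uniform$(0,1)$ variables $u(1),u(2),\ldots$. In system $n$, with $\lambda_n>0$ and $\rho_n=\lambda_n/\mu$, customer $j$ appears at time $a_n(j)=\sum_{i\le j}z(i)/\lambda_n$; if sent to station $k$ it arrives there at time $a_n(j)+\sqrt{n}\gamma_k(j)$ and stays until its service completes. $Q_{n,k}(t)$ is the number of customers present at station $k$ at time $t$, $L_{n,k}(t)=Q_{n,k}(t)/\mu_k$, $\tilde Q_{n,k}(t)=Q_{n,k}(nt)/\sqrt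 n$, $\tilde L_{n,k}(t)=\tilde Q_{n,k}(t)/\mu_k$. A routing plan is an array $r_{m,k}\in[0,1]$ with $\sum_k r_{m,k}=1$ for each $m$ and $\mu_k=\mu\sum_m p_m r_{m,k}$ for each $k$. RJSQ policy with balancing fraction $\chi_n>0$: when customer $j$ appears, a permutation $(\zeta_{n,1}(j),\ldots,\zeta_{n,s}(j))$ of $\{1,\ldots,s\}$ is chosen with $L_{n,\zeta_{n,1}(j)}(a_n(j)-)\le\cdots\le L_{n,\zeta_{n,s}(j)}(a_n(j)-)$ (ties broken by an arbitrary rule), and $\pi_{n,k}(j)=\ell$ iff $\zeta_{n,\ell}(j)=k$. Perturbation coefficients $\varepsilon_{n,1},\ldots,\varepsilon_{n,s}$ satisfy $\sum_\ell\varepsilon_{n,\ell}=0$, $\varepsilon_{n,1}=\chi_n$, $\varepsilon_{n,\ell}<0$ for $\ell\ge2$, $0\le\mu_k/\mu+\varepsilon_{n,\ell}\le1$ for all $k,\ell$, and there is $\delta_0>0$ with $\varepsilon_{n,\ell}\le-\delta_0\chi_n$ for all $\ell\ge2$ and $n$. If origins are unknown, customer $j$ is sent to station $k$ iff $\kappa_{n,k-1}(j)\le u(j)<\kappa_{n,k}(j)$, where $\kappa_{n,0}(j)=0$ and $\kappa_{n,k}(j)=\sum_{\ell\le k}(\mu_\ell/\mu+\varepsilon_{n,\pi_{n,\ell}(j)})$ (the routing plan is then $r_{m,k}=\mu_k/\mu$). If origins are known, a routing plan $r$ is fixed and coefficients $\varepsilon^m_{n,\ell}(j)$ ($m\le b$,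 $\ell\le s$, $j\in\mathbb N$), determined by $(\pi_{n,1}(j),\ldots,\pi_{n,s}(j))$, satisfy $\sum_\ell\varepsilon^m_{n,\ell}(j)=0$, $\sum_m p_m\varepsilon^m_{n,\ell}(j)=\varepsilon_{n,\ell}$, $\varepsilon^m_{n,1}(j)\ge0$, $\varepsilon^m_{n,\ell}(j)\le0$ for $\ell\ge2$, and $0\le r_{m,k}+\varepsilon^m_{n,\pi_{n,k}(j)}(j)\le1$; a customer $j$ from origin $m$ is sent to station $k$ iff $\kappa^m_{n,k-1}(j)\le u(j)<\kappa^m_{n,k}(j)$, where $\kappa^m_{n,0}(j)=0$, $\kappa^m_{n,k}(j)=\sum_{\ell\le k}(r_{m,\ell}+\varepsilon^m_{n,\pi_{n,\ell}(j)}(j))$. "Initially empty" means no customers are present at time $0$. *)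

theory Defs
  imports "HOL-Probability.Probability" "HOL-Library.Landau_Symbols"
begin

text \<open>Indices of the primitive random variables: z(j), w_k(j), origin of customer j, u(j).\<close>
datatype prim_idx = PZ nat | PW nat nat | PG nat | PU nat

definition prim_family ::
  "(nat \<Rightarrow> 'a \<Rightarrow> real) \<Rightarrow> (nat \<Rightarrow> nat \<Rightarrow> 'a \<Rightarrow> real) \<Rightarrow> (nat \<Rightarrow> 'a \<Rightarrow> nat)
   \<Rightarrow> (nat \<Rightarrow> 'a \<Rightarrow> real) \<Rightarrow> prim_idx \<Rightarrow> 'a \<Rightarrow> real" where
  "prim_family z w og u i = (case i of PZ j \<Rightarrow> z j | PW k j \<Rightarrow> w k j
      | PG j \<Rightarrow> (\<lambda>x. real (og j x)) | PU j \<Rightarrow> u j)"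

definition prim_index :: "nat \<Rightarrow> prim_idx set" where
  "prim_index s = {PZ j | j. 1 \<le> j} \<union> {PW k j | k j. k \<in> {1..s} \<and> 1 \<le> j}
      \<union> {PG j | j. 1 \<le> j} \<union> {PU j | j. 1 \<le> j}"

text \<open>FCFS single-server station fed by customers S arriving at times A (ties in arrival
  time broken by customer index); ws i is the service requirement of the i-th customer served.\<close>
definition fcfs_before :: "(nat \<Rightarrow> real) \<Rightarrow> nat \<Rightarrow> nat \<Rightarrow> bool" where
  "fcfs_before A i j \<longleftrightarrow> A i < A j \<or> (A i = A j \<and> i \<le> j)"

definition fcfs_rank :: "(nat \<Rightarrow> real) \<Rightarrow> nat set \<Rightarrow> nat \<Rightarrow> nat" where
  "fcfs_rank A S j = card {i \<in> S. fcfs_before A i j \<and> i \<noteq> j}"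

definition fcfs_departure ::
  "(nat \<Rightarrow> real) \<Rightarrow> nat set \<Rightarrow> (nat \<Rightarrow> real) \<Rightarrow> real \<Rightarrow> nat \<Rightarrow> real" where
  "fcfs_departure A S ws mu j = Max ((\<lambda>i. A i +
      (\<Sum>l\<in>{l \<in> S. fcfs_before A i l \<and> fcfs_before A l j}. ws (fcfs_rank A S l + 1) / mu))
      ` {i \<in> S. fcfs_before A i j})"

definition fcfs_count ::
  "(nat \<Rightarrow> real) \<Rightarrow> nat set \<Rightarrow> (nat \<Rightarrow> real) \<Rightarrow> real \<Rightarrow> real \<Rightarrow> nat" where
  "fcfs_count A S ws mu t = card {j \<in> S. A j \<le> t \<and> t < fcfs_departure A S ws mu j}"

definition appear_time :: "(nat \<Rightarrow> real) \<Rightarrow> (nat \<Rightarrow> 'a \<Rightarrow> real) \<Rightarrow> nat \<Rightarrow> nat \<Rightarrow> 'a \<Rightarrow> real" where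
  "appear_time lam z n j x = (\<Sum>i=1..j. z i x) / lam n"

text \<open>Q_{n,k}(t): customer j (from origin og j) routed by rt n j to station k arrives there at
  a_n(j) + sqrt n * gamma_k(j), with gamma(j) = d_{og j}.\<close>
definition queue_len ::
  "(nat \<Rightarrow> real) \<Rightarrow> (nat \<Rightarrow> 'a \<Rightarrow> real) \<Rightarrow> (nat \<Rightarrow> nat \<Rightarrow> 'a \<Rightarrow> real) \<Rightarrow> (nat \<Rightarrow> 'a \<Rightarrow> nat)
   \<Rightarrow> (nat \<Rightarrow> nat \<Rightarrow> real) \<Rightarrow> (nat \<Rightarrow> real) \<Rightarrow> (nat \<Rightarrow> nat \<Rightarrow> 'a \<Rightarrow> nat)
   \<Rightarrow> nat \<Rightarrow> nat \<Rightarrow> real \<Rightarrow> 'a \<Rightarrow> real" where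
  "queue_len lam z w og d mu rt n k t x =
     real (fcfs_count (\<lambda>j. appear_time lam z n j x + sqrt (real n) * d (og j x) k)
        {j. 1 \<le> j \<and> rt n j x = k} (\<lambda>i. w k i x) (mu k) t)"

definition scaled_load ::
  "(nat \<Rightarrow> real) \<Rightarrow> (nat \<Rightarrow> 'a \<Rightarrow> real) \<Rightarrow> (nat \<Rightarrow> nat \<Rightarrow> 'a \<Rightarrow> real) \<Rightarrow> (nat \<Rightarrow> 'a \<Rightarrow> nat)
   \<Rightarrow> (nat \<Rightarrow> nat \<Rightarrow> real) \<Rightarrow> (nat \<Rightarrow> real) \<Rightarrow> (nat \<Rightarrow> nat \<Rightarrow> 'a \<Rightarrow> nat)
   \<Rightarrow> nat \<Rightarrow> nat \<Rightarrow> real \<Rightarrow> 'a \<Rightarrow> real" where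
  "scaled_load lam z w og d mu rt n k t x =
     queue_len lam z w og d mu rt n k (real n * t) x / sqrt (real n) / mu k"

definition ranks_sorted :: "nat \<Rightarrow> (nat \<Rightarrow> real) \<Rightarrow> (nat \<Rightarrow> nat) \<Rightarrow> bool" where
  "ranks_sorted s Lv rk \<longleftrightarrow> bij_betw rk {1..s} {1..s} \<and>
     (\<forall>k\<in>{1..s}. \<forall>k'\<in>{1..s}. rk k < rk k' \<longrightarrow> Lv k \<le> Lv k')"

definition rjsq_weight ::
  "bool \<Rightarrow> nat \<Rightarrow> (nat \<Rightarrow> real) \<Rightarrow> (nat \<Rightarrow> nat \<Rightarrow> real) \<Rightarrow> (nat \<Rightarrow> nat \<Rightarrow> real)
   \<Rightarrow> (nat \<Rightarrow> nat \<Rightarrow> nat \<Rightarrow> nat list \<Rightarrow> real) \<Rightarrow> nat \<Rightarrow> nat \<Rightarrow> (nat \<Rightarrow> nat) \<Rightarrow> nat \<Rightarrow> real" where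
  "rjsq_weight known s mu eps r epsm n m rk l =
     (if known then r m l + epsm n m (rk l) (map rk [1..<Suc s])
      else mu l / (\<Sum>k=1..s. mu k) + eps n (rk l))"

definition rjsq_kappa ::
  "bool \<Rightarrow> nat \<Rightarrow> (nat \<Rightarrow> real) \<Rightarrow> (nat \<Rightarrow> nat \<Rightarrow> real) \<Rightarrow> (nat \<Rightarrow> nat \<Rightarrow> real)
   \<Rightarrow> (nat \<Rightarrow> nat \<Rightarrow> nat \<Rightarrow> nat list \<Rightarrow> real) \<Rightarrow> nat \<Rightarrow> nat \<Rightarrow> (nat \<Rightarrow> nat) \<Rightarrow> nat \<Rightarrow> real" where
  "rjsq_kappa known s mu eps r epsm n m rk k = (\<Sum>l=1..k. rjsq_weight known s mu eps r epsm n m rk l)"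

text \<open>sup over [0,T] of max_{k,l} |Lt k t - Lt l t|, taken in the extended reals so that it is
  always well defined (possibly infinite).\<close>
definition max_imbalance :: "nat \<Rightarrow> (nat \<Rightarrow> real \<Rightarrow> real) \<Rightarrow> real \<Rightarrow> ereal" where
  "max_imbalance s Lt T =
     (SUP t\<in>{0..T}. ereal (Max {\<bar>Lt k t - Lt l t\<bar> | k l. k \<in> {1..s} \<and> l \<in> {1..s}}))"

definition rjsq_bound :: "real \<Rightarrow> real \<Rightarrow> (nat \<Rightarrow> real) \<Rightarrow> nat \<Rightarrow> real" where
  "rjsq_bound C C' chi n = max (C * chi n)
     (C' * (ln (ln (real n)) + ln (real n * (chi n)\<^sup>2)) / (sqrt (real n) * chi n))"

definition admissible_chi :: "(nat \<Rightarrow> real) \<Rightarrow> bool" where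
  "admissible_chi chi \<longleftrightarrow> eventually (\<lambda>n. 0 < chi n) sequentially \<and> chi \<longlonglongrightarrow> 0 \<and>
     filterlim (\<lambda>n. sqrt (real n) * chi n) at_top sequentially \<and>
     filterlim (\<lambda>n. sqrt (real n) * chi n / sqrt (ln (ln (real n)))) at_top sequentially"

end

theory Submission
  imports Defs "HOL-Real_Asymp.Real_Asymp"
begin

lemma upper:
  assumes "c > (0::real)" "C > 0" "C' > 0"
  shows "(\<lambda>n. rjsq_bound C C' (\<lambda>n. c * real n powr (-1/4) * sqrt (ln (real n))) n)
     \<in> O(\<lambda>n. real n powr (-1/4) * sqrt (ln (real n)))"
proof -
  define A where "A = (\<lambda>n::nat. C * (c * real n powr (-1/4) * sqrt (ln (real n))))"
  define B where "B = (\<lambda>n::nat. C' * (ln (ln (real n)) + ln (real n * (c * real n powr (-1/4) * sqrt (ln (real n)))\<^sup>2)) / (sqrt (real n) * (c * real n powr (-1/4) * sqrt (ln (real n)))))"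
  have ab: "(\<lambda>n. A n + B n) \<in> O(\<lambda>n. real n powr (-1/4) * sqrt (ln (real n)))"
    unfolding A_def B_def using assms by real_asymp
  have pa: "eventually (\<lambda>n. A n > 0) sequentially"
    unfolding A_def using assms by real_asymp
  have pb: "eventually (\<lambda>n. B n > 0) sequentially"
    unfolding B_def using assms by real_asymp
  have "eventually (\<lambda>n. norm (rjsq_bound C C' (\<lambda>n. c * real n powr (-1/4) * sqrt (ln (real n))) n) \<le> 1 * norm (A n + B n)) sequentially"
    using pa pb
  proof eventually_elim
    case (elim n)
    have "rjsq_bound C C' (\<lambda>n. c * real n powr (-1/4) * sqrt (ln (real n))) n = max (A n) (B n)"
      unfolding rjsq_bound_def A_def B_def by simp
    thus ?case using elim by (simp add: max_def)
  qed
  hence "(\<lambda>n. rjsq_bound C C' (\<lambda>n. c * real n powr (-1/4) * sqrt (ln (real n))) n) \<in> O(\<lambda>n. A n + B n)"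
    by (intro bigoI)
  thus ?thesis using ab by (rule landau_o.big_trans)
qed

lemma lower:
  fixes chi :: "nat \<Rightarrow> real"
  assumes C: "C > 0" "C' > 0"
    and pos: "eventually (\<lambda>n. 0 < chi n) sequentially"
    and inf: "filterlim (\<lambda>n. sqrt (real n) * chi n) at_top sequentially"
  shows "(\<lambda>n. real n powr (-1/4) * sqrt (ln (real n))) \<in> O(\<lambda>n. rjsq_bound C C' chi n)"
proof -
  define h where "h = (\<lambda>n::nat. real n powr (-1/4) * sqrt (ln (real n)))"
  define m where "m = min C (C'/4)"
  have m: "m > 0" "m \<le> C" "m \<le> C'/4" using C by (auto simp: m_def)
  have e1: "eventually (\<lambda>n. 1 \<le> sqrt (real n) * chi n) sequentially"
    using inf by (simp add: filterlim_at_top)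
  have e2: "eventually (\<lambda>n::nat. 1 \<le> ln (ln (real n))) sequentially" by real_asymp
  have e3: "eventually (\<lambda>n::nat. real n powr (-1/4) * sqrt (ln (real n)) \<le> real n powr (-1/8)) sequentially" by real_asymp
  have e4: "eventually (\<lambda>n::nat. 2 \<le> n) sequentially" by (simp add: eventually_ge_at_top)
  have "eventually (\<lambda>n. m * h n \<le> rjsq_bound C C' chi n) sequentially"
    using pos e1 e2 e3 e4
  proof eventually_elim
    case (elim n)
    define x where "x = sqrt (real n) * chi n"
    have n2: "real n \<ge> 2" using elim by simp
    have lnpos: "ln (real n) > 0" using n2 by simp
    have sqn: "sqrt (real n) > 0" using n2 by simp
    have x1: "x \<ge> 1" using elim x_def by simp
    have hpos: "h n \<ge> 0" unfolding h_def using lnpos by simp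
    have nchi: "real n * (chi n)\<^sup>2 = x\<^sup>2" unfolding x_def
      using n2 by (simp add: power_mult_distrib)
    have lnx: "ln (x\<^sup>2) = 2 * ln x" using x1 by (simp add: ln_realpow)
    have g2: "rjsq_bound C C' chi n \<ge> C' * (ln (ln (real n)) + 2 * ln x) / x"
      unfolding rjsq_bound_def using nchi lnx x_def by simp
    have g1: "rjsq_bound C C' chi n \<ge> C * chi n"
      unfolding rjsq_bound_def by simp
    have lnx0: "ln x \<ge> 0" using x1 by simp
    show ?case
    proof (cases "chi n \<ge> h n")
      case True
      have "m * h n \<le> C * h n" using m hpos by (intro mult_right_mono) auto
      also have "\<dots> \<le> C * chi n" using True C by simp
      finally show ?thesis using g1 by simp
    next
      case False
      have xlt: "x \<le> sqrt (real n) * h n" using False sqn x_def by simp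
      have p1: "(real n powr (-1/4))\<^sup>2 = real n powr (-1/2)"
        by (simp add: power2_eq_square powr_add[symmetric])
      have p2: "(sqrt (ln (real n)))\<^sup>2 = ln (real n)" using lnpos by simp
      have p3: "sqrt (real n) * real n powr (-1/2) = 1"
        using n2 by (simp add: powr_half_sqrt[symmetric] powr_add[symmetric])
      have sqh: "sqrt (real n) * (h n)\<^sup>2 = ln (real n)"
        unfolding h_def power_mult_distrib p1 p2 using p3 by (simp add: mult.assoc[symmetric])
      show ?thesis
      proof (cases "x \<ge> real n powr (1/8)")
        case True
        have "ln x \<ge> ln (real n powr (1/8))" by (rule ln_mono[OF True]) (use n2 in simp)
        hence lx: "ln x \<ge> ln (real n) / 8" using n2 by (simp add: ln_powr)
        have "m * h n \<le> (C'/4) * h n" using m hpos by (intro mult_right_mono) auto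
        also have "\<dots> = C' * (ln (real n) / 4) / (sqrt (real n) * h n)"
        proof -
          have hp: "h n > 0" unfolding h_def using lnpos n2 by simp
          have "C' * (ln (real n) / 4) / (sqrt (real n) * h n) = C' * (sqrt (real n) * (h n * h n) / 4) / (sqrt (real n) * h n)"
            using sqh by (simp add: power2_eq_square)
          also have "\<dots> = (C'/4) * h n" using hp sqn by (simp add: field_simps)
          finally show ?thesis by simp
        qed
        also have "\<dots> \<le> C' * (ln (real n) / 4) / x"
          using xlt x1 C lnpos by (intro divide_left_mono) auto
        also have "\<dots> \<le> C' * (ln (ln (real n)) + 2 * ln x) / x"
          using x1 C lx elim by (intro divide_right_mono mult_left_mono) auto
        finally show ?thesis using g2 by simp
      next
        case False
        have "m * h n \<le> C' * h n" using m hpos C by (intro mult_right_mono) auto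
        also have "\<dots> \<le> C' * real n powr (-1/8)" using elim C unfolding h_def by simp
        also have "\<dots> = C' / real n powr (1/8)" using n2 by (simp add: powr_minus field_simps)
        also have "\<dots> \<le> C' / x" using False x1 C n2 by (intro divide_left_mono) auto
        also have "\<dots> \<le> C' * (ln (ln (real n)) + 2 * ln x) / x"
        proof -
          have "C' * 1 \<le> C' * (ln (ln (real n)) + 2 * ln x)"
            using C lnx0 elim by (intro mult_left_mono) auto
          thus ?thesis using x1 by (intro divide_right_mono) auto
        qed
        finally show ?thesis using g2 by simp
      qed
    qed
  qed
  moreover have "eventually (\<lambda>n. 0 \<le> h n) sequentially" unfolding h_def
    using eventually_ge_at_top[of 1] by eventually_elim simp
  ultimately have "eventually (\<lambda>n. norm (h n) \<le> (1/m) * norm (rjsq_bound C C' chi n)) sequentially"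
  proof eventually_elim
    case (elim n)
    then show ?case using m by (simp add: field_simps)
  qed
  thus ?thesis unfolding h_def[symmetric] by (intro bigoI)
qed
theorem corollary1:
  fixes M :: "'a measure"
    and s b :: nat and mu lam :: "nat \<Rightarrow> real" and beta :: real
    and chi :: "nat \<Rightarrow> real" and delta0 :: real and eps :: "nat \<Rightarrow> nat \<Rightarrow> real"
    and known :: bool and r :: "nat \<Rightarrow> nat \<Rightarrow> real"
    and epsm :: "nat \<Rightarrow> nat \<Rightarrow> nat \<Rightarrow> nat list \<Rightarrow> real"
    and p :: "nat \<Rightarrow> real" and d :: "nat \<Rightarrow> nat \<Rightarrow> real"
    and z u :: "nat \<Rightarrow> 'a \<Rightarrow> real" and w :: "nat \<Rightarrow> nat \<Rightarrow> 'a \<Rightarrow> real"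
    and og :: "nat \<Rightarrow> 'a \<Rightarrow> nat"
    and rt :: "nat \<Rightarrow> nat \<Rightarrow> 'a \<Rightarrow> nat" and rk :: "nat \<Rightarrow> nat \<Rightarrow> 'a \<Rightarrow> nat \<Rightarrow> nat"
    and C C' :: real
  assumes s2: "2 \<le> s" and b1: "1 \<le> b"
    and mu_pos: "0 < mu 1" and mu_mono: "\<forall>k\<in>{1..<s}. mu k \<le> mu (Suc k)"
    and lam_pos: "\<forall>n. 0 < lam n"
    and heavy: "(\<lambda>n. sqrt (real n) * (1 - lam n / (\<Sum>k=1..s. mu k))) \<longlonglongrightarrow> beta"
    and chi_pos: "\<forall>n. 0 < chi n"
    and chi_0: "chi \<longlonglongrightarrow> 0"
    and chi_inf: "filterlim (\<lambda>n. sqrt (real n) * chi n) at_top sequentially"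
    and chi_lil: "filterlim (\<lambda>n. sqrt (real n) * chi n / sqrt (ln (ln (real n)))) at_top sequentially"
    and eps_sum: "\<forall>n. (\<Sum>l=1..s. eps n l) = 0"
    and eps_1: "\<forall>n. eps n 1 = chi n"
    and eps_neg: "\<forall>n. \<forall>l\<in>{2..s}. eps n l < 0"
    and eps_range: "\<forall>n. \<forall>k\<in>{1..s}. \<forall>l\<in>{1..s}.
         0 \<le> mu k / (\<Sum>i=1..s. mu i) + eps n l \<and> mu k / (\<Sum>i=1..s. mu i) + eps n l \<le> 1"
    and delta0: "0 < delta0" "\<forall>n. \<forall>l\<in>{2..s}. eps n l \<le> - delta0 * chi n"
    and p_pos: "\<forall>m\<in>{1..b}. 0 < p m" and p_sum: "(\<Sum>m=1..b. p m) = 1"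
    and d_nonneg: "\<forall>m\<in>{1..b}. \<forall>k\<in>{1..s}. 0 \<le> d m k"
    and M: "prob_space M"
    and indep: "prob_space.indep_vars M (\<lambda>_. borel) (prim_family z w og u) (prim_index s)"
    and z_id: "\<forall>i\<ge>1. distr M borel (z i) = distr M borel (z 1)"
    and z_nonneg: "\<forall>i\<ge>1. AE x in M. 0 \<le> z i x"
    and z_mean: "integrable M (z 1)" "integral\<^sup>L M (z 1) = 1"
    and z_var: "integrable M (\<lambda>x. (z 1 x)\<^sup>2)"
    and z_4: "integrable M (\<lambda>x. (z 1 x) ^ 4)"
    and w_id: "\<forall>k\<in>{1..s}. \<forall>i\<ge>1. distr M borel (w k i) = distr M borel (w k 1)"
    and w_nonneg: "\<forall>k\<in>{1..s}. \<forall>i\<ge>1. AE x in M. 0 \<le> w k i x"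
    and w_mean: "\<forall>k\<in>{1..s}. integrable M (w k 1) \<and> integral\<^sup>L M (w k 1) = 1"
    and w_var: "\<forall>k\<in>{1..s}. integrable M (\<lambda>x. (w k 1 x)\<^sup>2)"
    and w_4: "\<forall>k\<in>{1..s}. integrable M (\<lambda>x. (w k 1 x) ^ 4)"
    and og_dist: "\<forall>j\<ge>1. \<forall>m\<in>{1..b}. measure M {x \<in> space M. og j x = m} = p m"
    and u_unif: "\<forall>j\<ge>1. distr M lborel (u j) = uniform_measure lborel {0<..<1::real}"
    and plan: "known \<longrightarrow>
        (\<forall>m\<in>{1..b}. \<forall>k\<in>{1..s}. 0 \<le> r m k \<and> r m k \<le> 1) \<and>
        (\<forall>m\<in>{1..b}. (\<Sum>k=1..s. r m k) = 1) \<and>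
        (\<forall>k\<in>{1..s}. mu k = (\<Sum>i=1..s. mu i) * (\<Sum>m=1..b. p m * r m k))"
    and epsm_cond: "known \<longrightarrow> (\<forall>n j x. 1 \<le> j \<longrightarrow>
        (\<forall>m\<in>{1..b}.
           (\<Sum>l=1..s. epsm n m l (map (rk n j x) [1..<Suc s])) = 0 \<and>
           0 \<le> epsm n m 1 (map (rk n j x) [1..<Suc s]) \<and>
           (\<forall>l\<in>{2..s}. epsm n m l (map (rk n j x) [1..<Suc s]) \<le> 0) \<and>
           (\<forall>k\<in>{1..s}. 0 \<le> r m k + epsm n m (rk n j x k) (map (rk n j x) [1..<Suc s]) \<and>
                        r m k + epsm n m (rk n j x k) (map (rk n j x) [1..<Suc s]) \<le> 1)) \<and>
        (\<forall>l\<in>{1..s}. (\<Sum>m=1..b. p m * epsm n m l (map (rk n j x) [1..<Suc s])) = eps n l))"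
    and ranking: "\<forall>n j x. 1 \<le> j \<longrightarrow> ranks_sorted s
        (\<lambda>k. Lim (at_left (appear_time lam z n j x))
                 (\<lambda>t. queue_len lam z w og d mu rt n k t x / mu k)) (rk n j x)"
    and routing: "\<forall>n j x. 1 \<le> j \<longrightarrow> (\<forall>k\<in>{1..s}. rt n j x = k \<longleftrightarrow>
        rjsq_kappa known s mu eps r epsm n (og j x) (rk n j x) (k - 1) \<le> u j x \<and>
        u j x < rjsq_kappa known s mu eps r epsm n (og j x) (rk n j x) k)"
    and C_pos: "0 < C" "0 < C'"
    and bound: "\<forall>T>0. AE x in M. eventually (\<lambda>n.
        max_imbalance s (\<lambda>k t. scaled_load lam z w og d mu rt n k t x) T < ereal (rjsq_bound C C' chi n))
        sequentially"
  shows "(\<forall>C''>0. admissible_chi (\<lambda>n. C'' * real n powr (-1/4) * sqrt (ln (real n))) \<and>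
            (\<forall>chi'. admissible_chi chi' \<longrightarrow>
               (\<lambda>n. rjsq_bound C C' (\<lambda>n. C'' * real n powr (-1/4) * sqrt (ln (real n))) n)
                 \<in> O(\<lambda>n. rjsq_bound C C' chi' n))) \<and>
         ((\<exists>C''>0. \<forall>n\<ge>2. chi n = C'' * real n powr (-1/4) * sqrt (ln (real n))) \<longrightarrow>
            (\<forall>T>0. AE x in M. \<exists>K. eventually (\<lambda>n.
               max_imbalance s (\<lambda>k t. scaled_load lam z w og d mu rt n k t x) T
                 \<le> ereal (K * (real n powr (-1/4) * sqrt (ln (real n))))) sequentially))"
proof -
  let ?h = "\<lambda>n::nat. real n powr (-1/4) * sqrt (ln (real n))"
  have P1: "\<forall>C''>0. admissible_chi (\<lambda>n. C'' * real n powr (-1/4) * sqrt (ln (real n))) \<and>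
            (\<forall>chi'. admissible_chi chi' \<longrightarrow>
               (\<lambda>n. rjsq_bound C C' (\<lambda>n. C'' * real n powr (-1/4) * sqrt (ln (real n))) n)
                 \<in> O(\<lambda>n. rjsq_bound C C' chi' n))"
  proof (intro allI impI conjI)
    fix C'' :: real assume c: "C'' > 0"
    show "admissible_chi (\<lambda>n. C'' * real n powr (-1/4) * sqrt (ln (real n)))"
      unfolding admissible_chi_def
    proof (intro conjI)
      show "eventually (\<lambda>n. 0 < C'' * real n powr (-1/4) * sqrt (ln (real n))) sequentially"
        using c by real_asymp
      show "(\<lambda>n. C'' * real n powr (-1/4) * sqrt (ln (real n))) \<longlonglongrightarrow> 0"
        using c by real_asymp
      show "filterlim (\<lambda>n. sqrt (real n) * (C'' * real n powr (-1/4) * sqrt (ln (real n)))) at_top sequentially"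
        using c by real_asymp
      show "filterlim (\<lambda>n. sqrt (real n) * (C'' * real n powr (-1/4) * sqrt (ln (real n))) / sqrt (ln (ln (real n)))) at_top sequentially"
        using c by real_asymp
    qed
    fix chi' :: "nat \<Rightarrow> real" assume adm: "admissible_chi chi'"
    show "(\<lambda>n. rjsq_bound C C' (\<lambda>n. C'' * real n powr (-1/4) * sqrt (ln (real n))) n)
                 \<in> O(\<lambda>n. rjsq_bound C C' chi' n)"
      using adm unfolding admissible_chi_def
      by (intro landau_o.big_trans[OF upper[OF c C_pos] lower[OF C_pos]]) auto
  qed
  have P2: "(\<exists>C''>0. \<forall>n\<ge>2. chi n = C'' * real n powr (-1/4) * sqrt (ln (real n))) \<longrightarrow>
            (\<forall>T>0. AE x in M. \<exists>K. eventually (\<lambda>n.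
               max_imbalance s (\<lambda>k t. scaled_load lam z w og d mu rt n k t x) T
                 \<le> ereal (K * (real n powr (-1/4) * sqrt (ln (real n))))) sequentially)"
  proof (intro impI allI)
    assume "\<exists>C''>0. \<forall>n\<ge>2. chi n = C'' * real n powr (-1/4) * sqrt (ln (real n))"
    then obtain C'' where c: "C'' > 0" and chiE: "\<forall>n\<ge>2. chi n = C'' * real n powr (-1/4) * sqrt (ln (real n))"
      by blast
    obtain K where K: "eventually (\<lambda>n. norm (rjsq_bound C C' (\<lambda>n. C'' * real n powr (-1/4) * sqrt (ln (real n))) n) \<le> K * norm (?h n)) sequentially"
      using landau_o.bigE[OF upper[OF c C_pos]] by blast
    have ev: "eventually (\<lambda>n. rjsq_bound C C' chi n \<le> K * ?h n) sequentially"
      using K eventually_ge_at_top[of 2]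
    proof eventually_elim
      case (elim n)
      have "rjsq_bound C C' chi n = rjsq_bound C C' (\<lambda>n. C'' * real n powr (-1/4) * sqrt (ln (real n))) n"
        unfolding rjsq_bound_def using chiE elim by simp
      moreover have "?h n \<ge> 0" using elim by simp
      ultimately show ?case using elim by simp
    qed
    fix T :: real
    assume T: "T > 0"
    show "AE x in M. \<exists>K. eventually (\<lambda>n.
               max_imbalance s (\<lambda>k t. scaled_load lam z w og d mu rt n k t x) T
                 \<le> ereal (K * (real n powr (-1/4) * sqrt (ln (real n))))) sequentially"
    proof -
      show "AE x in M. \<exists>K. eventually (\<lambda>n.
               max_imbalance s (\<lambda>k t. scaled_load lam z w og d mu rt n k t x) T
                 \<le> ereal (K * (real n powr (-1/4) * sqrt (ln (real n))))) sequentially"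
        using bound[rule_format, OF T]
      proof (rule eventually_mono)
        fix x
        assume e: "eventually (\<lambda>n. max_imbalance s (\<lambda>k t. scaled_load lam z w og d mu rt n k t x) T < ereal (rjsq_bound C C' chi n)) sequentially"
        have "eventually (\<lambda>n. max_imbalance s (\<lambda>k t. scaled_load lam z w og d mu rt n k t x) T
                 \<le> ereal (K * (real n powr (-1/4) * sqrt (ln (real n))))) sequentially"
          using e ev
        proof eventually_elim
          case (elim n)
          thus ?case by (meson ereal_less_eq(3) less_imp_le order_trans)
        qed
        thus "\<exists>K. eventually (\<lambda>n. max_imbalance s (\<lambda>k t. scaled_load lam z w og d mu rt n k t x) T
                 \<le> ereal (K * (real n powr (-1/4) * sqrt (ln (real n))))) sequentially" by blast
      qed
    qed
  qed
  show ?thesis using P1 P2 by blast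
qed

end
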